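(* Let $S$ be a closed type of system $\mathcal F$ not containing the type constant $O$. Then $S$ is an output type if and only if: for every normal $\lambda$-term $t$ and all types $A_1,\dots,A_r$ that end with $O$, if $x_1:A_1,\dots,x_r:A_r\vdash_{\mathcal F} t : S$, then $x_i\notin Fv(t)$ for all $1\le i\le r$.
   Context: $\lambda$-terms are those of the untyped $\lambda$-calculus; $Fv(t)$ the free variables; normal means without $\beta$-redex. Types of system $\mathcal F$ are built from type variables and type constants (atomic, not quantifiable; $O$ is one) with $\rightarrow$ and $\forall$; only proper types (in every $\forall XA$, $X$ occurs free in $A$). Typing: (ax) $\Gamma \vdash x_i : A_i$ for $x_i:A_i\in\Gamma$; ($\rightarrow_i$) from $\Gamma, x:B \vdash t : C$ infer $\Gamma \vdash \lambda x t : B \rightarrow C$; ($\rightarrow_e$) from $\Gamma \vdash u : B\rightarrow C$, $\Gamma \vdash v : B$ infer $\Gamma \vdash (u)v : C$; ($\forall_i$) from $\Gamma \vdash t : A$, $X$ not free in $\Gamma$, infer $\Gamma \vdash t : \forall X A$; ($\forall_e$) from $\Gamma \vdash t : \forall X A$ infer $\Gamma \vdash t : A[C/X]$. An output type is a closed type $S$ not containing $O$ such that for every normal $t$ and variable $\alpha$, $\alpha:O\vdash_{\mathcal F}t:S$ implies $\alpha\notin Fv(t)$. For $K$ a type variable or constant, "$A$ ends with $K$" is defined inductively: $K$ ends with $K$; if $A$ ends with $K$ then $B\rightarrow A$ ends with $K$ for every type $B$; if $A$ ends with $K$ then $\forall X A$ ends with $K$ for every type variable $X\neq K$. *)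

theory Defs
  imports Main
begin

datatype lterm = Var nat | Lam nat lterm | App lterm lterm

fun Fv :: "lterm \<Rightarrow> nat set" where
  "Fv (Var x) = {x}"
| "Fv (Lam x t) = Fv t - {x}"
| "Fv (App u v) = Fv u \<union> Fv v"

fun normal :: "lterm \<Rightarrow> bool" where
  "normal (Var x) = True"
| "normal (Lam x t) = normal t"
| "normal (App u v) = ((\<forall>y s. u \<noteq> Lam y s) \<and> normal u \<and> normal v)"

section \<open>Types of system F with type constants (de Bruijn indices for type variables)\<close>

datatype ty = TVar nat | TConst nat | Arr ty ty | All ty

definition TO :: ty where "TO = TConst 0"

fun tfv :: "ty \<Rightarrow> nat set" where
  "tfv (TVar n) = {n}"
| "tfv (TConst c) = {}"
| "tfv (Arr A B) = tfv A \<union> tfv B"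
| "tfv (All A) = {n - 1 | n. n \<in> tfv A \<and> n > 0}"

fun consts_of :: "ty \<Rightarrow> nat set" where
  "consts_of (TVar n) = {}"
| "consts_of (TConst c) = {c}"
| "consts_of (Arr A B) = consts_of A \<union> consts_of B"
| "consts_of (All A) = consts_of A"

definition closed_ty :: "ty \<Rightarrow> bool" where
  "closed_ty A \<longleftrightarrow> tfv A = {}"

definition contains_O :: "ty \<Rightarrow> bool" where
  "contains_O A \<longleftrightarrow> 0 \<in> consts_of A"

fun proper :: "ty \<Rightarrow> bool" where
  "proper (TVar n) = True"
| "proper (TConst c) = True"
| "proper (Arr A B) = (proper A \<and> proper B)"
| "proper (All A) = (proper A \<and> 0 \<in> tfv A)"

fun tshift :: "nat \<Rightarrow> nat \<Rightarrow> ty \<Rightarrow> ty" where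
  "tshift d c (TVar n) = (if n < c then TVar n else TVar (n + d))"
| "tshift d c (TConst k) = TConst k"
| "tshift d c (Arr A B) = Arr (tshift d c A) (tshift d c B)"
| "tshift d c (All A) = All (tshift d (Suc c) A)"

text \<open>instantiation of the variable with index k by C (removing that binder level):
  tinst 0 C A is A[C/X] where All A = \<forall>X A\<close>
fun tinst :: "nat \<Rightarrow> ty \<Rightarrow> ty \<Rightarrow> ty" where
  "tinst k C (TVar n) = (if n < k then TVar n else if n = k then tshift k 0 C else TVar (n - 1))"
| "tinst k C (TConst c) = TConst c"
| "tinst k C (Arr A B) = Arr (tinst k C A) (tinst k C B)"
| "tinst k C (All A) = All (tinst (Suc k) C A)"

inductive typing :: "(nat \<times> ty) list \<Rightarrow> lterm \<Rightarrow> ty \<Rightarrow> bool" where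
  ax: "map_of \<Gamma> x = Some A \<Longrightarrow> proper A \<Longrightarrow> typing \<Gamma> (Var x) A"
| arr_i: "typing ((x, B) # \<Gamma>) t C \<Longrightarrow> proper B \<Longrightarrow> typing \<Gamma> (Lam x t) (Arr B C)"
| arr_e: "typing \<Gamma> u (Arr B C) \<Longrightarrow> typing \<Gamma> v B \<Longrightarrow> typing \<Gamma> (App u v) C"
| all_i: "typing (map (\<lambda>(x, B). (x, tshift 1 0 B)) \<Gamma>) t A \<Longrightarrow> 0 \<in> tfv A
          \<Longrightarrow> typing \<Gamma> t (All A)"
| all_e: "typing \<Gamma> t (All A) \<Longrightarrow> proper C \<Longrightarrow> typing \<Gamma> t (tinst 0 C A)"

definition output_type :: "ty \<Rightarrow> bool" where
  "output_type S \<longleftrightarrow> closed_ty S \<and> proper S \<and> \<not> contains_O S \<and>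
     (\<forall>t \<alpha>. normal t \<longrightarrow> typing [(\<alpha>, TO)] t S \<longrightarrow> \<alpha> \<notin> Fv t)"

text \<open>ends_with K A for K a type variable or constant; under a binder the
  index of a variable K is lifted, so the bound variable is never K\<close>
fun ends_with :: "ty \<Rightarrow> ty \<Rightarrow> bool" where
  "ends_with K (TVar n) = (K = TVar n)"
| "ends_with K (TConst c) = (K = TConst c)"
| "ends_with K (Arr B A) = ends_with K A"
| "ends_with K (All A) = ends_with (tshift 1 0 K) A"

end

theory Submission
  imports Defs
begin

fun arity :: "ty \<Rightarrow> nat" where
  "arity (Arr B A) = Suc (arity A)"
| "arity (All A) = arity A"
| "arity _ = 0"

fun hd :: "lterm \<Rightarrow> nat option" where
  "hd (Var x) = Some x"
| "hd (App u v) = hd u"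
| "hd (Lam x t) = None"

fun nargs :: "lterm \<Rightarrow> nat" where
  "nargs (App u v) = Suc (nargs u)"
| "nargs _ = 0"

fun avars :: "lterm \<Rightarrow> nat set" where
  "avars (Var x) = {x}"
| "avars (Lam x t) = insert x (avars t)"
| "avars (App u v) = avars u \<union> avars v"

lemma finite_avars: "finite (avars t)"
  by (induction t) auto

fun lams :: "nat \<Rightarrow> nat \<Rightarrow> lterm" where
  "lams a 0 = Var a"
| "lams a (Suc n) = Lam (Suc a) (lams a n)"

definition badk :: "(nat \<Rightarrow> nat option) \<Rightarrow> lterm \<Rightarrow> nat option" where
  "badk f t = (case hd t of Some x \<Rightarrow> f x | None \<Rightarrow> None)"

fun tr :: "(nat \<Rightarrow> nat option) \<Rightarrow> nat \<Rightarrow> lterm \<Rightarrow> lterm" where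
  "tr f a (Var x) = (case f x of Some k \<Rightarrow> lams a k | None \<Rightarrow> Var x)"
| "tr f a (Lam x t) = Lam x (tr (f(x:=None)) a t)"
| "tr f a (App u v) = (case badk f u of Some k \<Rightarrow> lams a (k - Suc (nargs u))
                        | None \<Rightarrow> App (tr f a u) (tr f a v))"

lemma ends_shift: "ends_with (TConst c) A \<Longrightarrow>
   ends_with (TConst c) (tshift d k A) \<and> arity (tshift d k A) = arity A"
  by (induction A arbitrary: k) auto

lemma ends_inst: "ends_with (TConst c) A \<Longrightarrow>
   ends_with (TConst c) (tinst k C A) \<and> arity (tinst k C A) = arity A"
  by (induction A arbitrary: k) auto

lemma tfv_shift: "n \<in> tfv A \<Longrightarrow> n < c \<Longrightarrow> n \<in> tfv (tshift d c A)"
proof (induction A arbitrary: n c)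
  case (All A)
  then obtain m where "m \<in> tfv A" "m > 0" "n = m - 1" by auto
  with All.IH[of m "Suc c"] All.prems show ?case by force
qed auto

lemma tfv_inst: "n \<in> tfv A \<Longrightarrow> n < k \<Longrightarrow> n \<in> tfv (tinst k C A)"
proof (induction A arbitrary: n k)
  case (All A)
  then obtain m where "m \<in> tfv A" "m > 0" "n = m - 1" by auto
  with All.IH[of m "Suc k"] All.prems show ?case by force
qed auto

lemma proper_shift: "proper A \<Longrightarrow> proper (tshift d c A)"
  by (induction A arbitrary: c) (auto intro: tfv_shift)

lemma proper_inst: "proper A \<Longrightarrow> proper C \<Longrightarrow> proper (tinst k C A)"
  by (induction A arbitrary: k) (auto intro: tfv_inst proper_shift)

lemma map_of_shift: "map_of (map (\<lambda>(x, B). (x, g B)) G) z = map_option g (map_of G z)"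
  by (induction G) auto

lemma lams_typing: "ends_with TO C \<Longrightarrow> proper C \<Longrightarrow> map_of G a = Some TO \<Longrightarrow>
   typing G (lams a (arity C)) C"
proof (induction C arbitrary: G)
  case (TVar n) then show ?case by (simp add: TO_def)
next
  case (TConst c) then show ?case by (auto simp: TO_def intro: typing.ax)
next
  case (Arr B A)
  have "typing ((Suc a, B) # G) (lams a (arity A)) A"
    using Arr by auto
  then show ?case using Arr by (auto intro: typing.arr_i)
next
  case (All A)
  have "typing (map (\<lambda>(x, B). (x, tshift 1 0 B)) G) (lams a (arity A)) A"
    using All by (auto simp: map_of_shift TO_def)
  then show ?case using All by (auto intro: typing.all_i)
qed

lemma badfacts: "typing G t C \<Longrightarrow> hd t = Some x \<Longrightarrow> map_of G x = Some A \<Longrightarrow>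
   ends_with TO A \<Longrightarrow> proper A \<Longrightarrow>
   proper C \<and> ends_with TO C \<and> nargs t \<le> arity A \<and> arity C = arity A - nargs t"
proof (induction arbitrary: A x rule: typing.induct)
  case (ax \<Gamma> x A) then show ?case by auto
next
  case (arr_i x B \<Gamma> t C) then show ?case by auto
next
  case (arr_e \<Gamma> u B C v)
  then have "proper (Arr B C) \<and> ends_with TO (Arr B C) \<and> nargs u \<le> arity A \<and>
     arity (Arr B C) = arity A - nargs u" by auto
  then show ?case by auto
next
  case (all_i \<Gamma> t A0)
  have "ends_with TO (tshift 1 0 A) \<and> arity (tshift 1 0 A) = arity A"
    using ends_shift all_i.prems unfolding TO_def by blast
  moreover have "proper (tshift 1 0 A)" using all_i.prems proper_shift by blast
  moreover have "map_of (map (\<lambda>(x, B). (x, tshift 1 0 B)) \<Gamma>) x = Some (tshift 1 0 A)"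
    using all_i.prems by (simp add: map_of_shift)
  ultimately have "proper A0 \<and> ends_with TO A0 \<and> nargs t \<le> arity A \<and> arity A0 = arity A - nargs t"
    using all_i.IH[of x "tshift 1 0 A"] all_i.prems by auto
  then show ?case using all_i.hyps by (auto simp: TO_def)
next
  case (all_e \<Gamma> t A0 C)
  then have h: "proper (All A0) \<and> ends_with TO (All A0) \<and> nargs t \<le> arity A \<and> arity (All A0) = arity A - nargs t"
    by blast
  then have "ends_with TO A0" by (simp add: TO_def)
  then have "ends_with TO (tinst 0 C A0) \<and> arity (tinst 0 C A0) = arity A0"
    using ends_inst unfolding TO_def by blast
  then show ?case using h all_e.hyps proper_inst by auto
qed

definition inv :: "(nat \<Rightarrow> nat option) \<Rightarrow> nat \<Rightarrow> (nat \<times> ty) list \<Rightarrow> (nat \<times> ty) list \<Rightarrow> bool" where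
  "inv f a G G' \<longleftrightarrow> map_of G' a = Some TO \<and> (\<forall>z. z \<noteq> a \<longrightarrow> f z = None \<longrightarrow> map_of G' z = map_of G z)
     \<and> (\<forall>z k. f z = Some k \<longrightarrow> (\<exists>A. map_of G z = Some A \<and> proper A \<and> ends_with TO A \<and> arity A = k))"

lemma tr_typing: "typing G t C \<Longrightarrow> inv f a G G' \<Longrightarrow> a \<notin> avars t \<Longrightarrow> typing G' (tr f a t) C"
proof (induction arbitrary: f G' rule: typing.induct)
  case (ax \<Gamma> x A)
  show ?case
  proof (cases "f x")
    case None
    then show ?thesis using ax by (auto simp: inv_def intro: typing.ax)
  next
    case (Some k)
    then obtain A' where "map_of \<Gamma> x = Some A'" "proper A'" "ends_with TO A'" "arity A' = k"
      using ax.prems unfolding inv_def by blast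
    then show ?thesis using Some ax lams_typing[of A G' a] by (auto simp: inv_def)
  qed
next
  case (arr_i x B \<Gamma> t C)
  have "inv (f(x:=None)) a ((x, B) # \<Gamma>) ((x, B) # G')"
    using arr_i.prems unfolding inv_def by auto
  then have "typing ((x, B) # G') (tr (f(x:=None)) a t) C" using arr_i by auto
  then show ?case using arr_i by (auto intro: typing.arr_i)
next
  case (arr_e \<Gamma> u B C v)
  show ?case
  proof (cases "badk f u")
    case None
    then show ?thesis using arr_e by (auto intro!: typing.arr_e)
  next
    case (Some k)
    then obtain x where hx: "hd u = Some x" "f x = Some k" unfolding badk_def
      by (auto split: option.splits)
    then obtain A where A: "map_of \<Gamma> x = Some A" "proper A" "ends_with TO A" "arity A = k"
      using arr_e.prems unfolding inv_def by blast
    have "typing \<Gamma> (App u v) C" using arr_e.hyps by (auto intro: typing.arr_e)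
    from badfacts[OF this _ A(1) A(3) A(2)] hx
    have "proper C \<and> ends_with TO C \<and> arity C = k - Suc (nargs u)" using A(4) by auto
    then show ?thesis using Some lams_typing[of C G' a] arr_e.prems by (auto simp: inv_def)
  qed
next
  case (all_i \<Gamma> t A)
  have "inv f a (map (\<lambda>(x, B). (x, tshift 1 0 B)) \<Gamma>) (map (\<lambda>(x, B). (x, tshift 1 0 B)) G')"
    using all_i.prems unfolding inv_def
    apply (simp add: map_of_shift)
    apply (auto simp: TO_def)
    apply (metis TO_def ends_shift proper_shift)+
    done
  then show ?case using all_i by (auto intro: typing.all_i)
next
  case (all_e \<Gamma> t A C)
  then show ?case by (auto intro: typing.all_e)
qed

lemma lams_normal: "normal (lams a n)"
  by (induction n) auto

lemma lams_fv: "a \<in> Fv (lams a n)"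
  by (induction n) auto

lemma tr_notlam: "badk f t = None \<Longrightarrow> (\<forall>y s. t \<noteq> Lam y s) \<Longrightarrow> (\<forall>y s. tr f a t \<noteq> Lam y s)"
  by (cases t) (auto simp: badk_def split: option.splits)

lemma tr_normal: "normal t \<Longrightarrow> normal (tr f a t)"
proof (induction t arbitrary: f)
  case (App u v)
  show ?case
  proof (cases "badk f u")
    case None
    then show ?thesis using App tr_notlam[of f u a] by auto
  qed (auto simp: lams_normal)
qed (auto simp: lams_normal split: option.splits)

lemma tr_fv: "x \<in> Fv t \<Longrightarrow> f x \<noteq> None \<Longrightarrow> a \<notin> avars t \<Longrightarrow> a \<in> Fv (tr f a t)"
proof (induction t arbitrary: f)
  case (App u v)
  show ?case
  proof (cases "badk f u")
    case None
    then show ?thesis using App by auto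
  qed (auto simp: lams_fv)
qed (auto simp: lams_fv split: option.splits)

theorem theorem2p1p1:
  assumes "closed_ty S" and "proper S" and "\<not> contains_O S"
  shows "output_type S \<longleftrightarrow>
    (\<forall>t \<Gamma>. normal t \<longrightarrow> distinct (map fst \<Gamma>) \<longrightarrow>
       (\<forall>(x, A) \<in> set \<Gamma>. proper A \<and> ends_with TO A) \<longrightarrow>
       typing \<Gamma> t S \<longrightarrow> (\<forall>x \<in> fst ` set \<Gamma>. x \<notin> Fv t))"
proof
  assume out: "output_type S"
  show "\<forall>t \<Gamma>. normal t \<longrightarrow> distinct (map fst \<Gamma>) \<longrightarrow>
       (\<forall>(x, A) \<in> set \<Gamma>. proper A \<and> ends_with TO A) \<longrightarrow>
       typing \<Gamma> t S \<longrightarrow> (\<forall>x \<in> fst ` set \<Gamma>. x \<notin> Fv t)"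
  proof (intro allI impI ballI)
    fix t \<Gamma> x
    assume nt: "normal t" and "distinct (map fst \<Gamma>)"
      and good: "\<forall>(x, A) \<in> set \<Gamma>. proper A \<and> ends_with TO A"
      and ty: "typing \<Gamma> t S" and xin: "x \<in> fst ` set \<Gamma>"
    show "x \<notin> Fv t"
    proof
      assume xf: "x \<in> Fv t"
      obtain a where a: "a \<notin> avars t"
        using ex_new_if_finite[OF infinite_UNIV_nat finite_avars] by blast
      define f where "f = (\<lambda>z. map_option arity (map_of \<Gamma> z))"
      have inv: "inv f a \<Gamma> [(a, TO)]"
        unfolding inv_def f_def using good
        by (auto dest!: map_of_SomeD simp: map_option_case split: option.splits)
      have "typing [(a, TO)] (tr f a t) S" using tr_typing[OF ty inv a] .
      moreover have "normal (tr f a t)" using tr_normal[OF nt] .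
      moreover have "f x \<noteq> None" using xin unfolding f_def
        by (auto simp: map_of_eq_None_iff)
      then have "a \<in> Fv (tr f a t)" using tr_fv[OF xf _ a] by blast
      ultimately show False using out unfolding output_type_def by blast
    qed
  qed
next
  assume H: "\<forall>t \<Gamma>. normal t \<longrightarrow> distinct (map fst \<Gamma>) \<longrightarrow>
       (\<forall>(x, A) \<in> set \<Gamma>. proper A \<and> ends_with TO A) \<longrightarrow>
       typing \<Gamma> t S \<longrightarrow> (\<forall>x \<in> fst ` set \<Gamma>. x \<notin> Fv t)"
  show "output_type S"
    unfolding output_type_def
  proof (intro conjI allI impI)
    fix t a assume "normal t" "typing [(a, TO)] t S"
    then show "a \<notin> Fv t" using H[rule_format, of t "[(a, TO)]"] by (auto simp: TO_def)
  qed (use assms in auto)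
qed

end
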